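(* Let $Z,W,Y$ be Hilbert spaces. Assume: $A$ (resp. $E$) is a closed densely defined operator on $Z$ (resp. $W$); $C:D(A)\to Y$ and $F:Y\to D(E^* )'$ are bounded; $A$ and $E$ are diagonalizable in Riesz bases $(z_j)_{j\ge1}$ of $Z$ and $(w_k)_{k\ge1}$ of $W$ with $Az_j=\lambda_jz_j$, $Ew_k=\mu_kw_k$; and $A$ and $E$ share no eigenvalue. Let $\mathcal{A}$ be the operator on $\mathcal{X}=Z\times W$ given by $\mathcal{A}(z,w)=(Az,\ FCz+E_{-1}w)$ on $D(\mathcal{A})=\{(z,w)\in D(A)\times W: E_{-1}w+FCz\in W\}$, whose eigenvectors are $\mathbf{Z}_k=(0,w_k)$ and $\mathbf{Z}_j=(z_j,(\lambda_j-E)^{-1}FCz_j)$. If $$\sum_j\|(\lambda_j-E)^{-1}FCz_j\|_W^2<\infty,$$ then the normalized eigenvectors $\{\mathbf{Z}_j/\|\mathbf{Z}_j\|_{\mathcal{X}}\}_j\cup\{\mathbf{Z}_k/\|\mathbf{Z}_k\|_{\mathcal{X}}\}_k$ form a Riesz basis of $\mathcal{X}$.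
   Context: $D(E^* )'$ denotes the dual of $D(E^* )$ with pivot $W$, $E_{-1}:W\to D(E^* )'$ the unique continuous extension of $E$, and $(\lambda_j-E)^{-1}$ is understood as the resolvent extended to $D(E^* )'\to W$. *)

theory Defs
  imports "HOL-Analysis.Analysis"
begin

text \<open>Complex Hilbert spaces are modelled as real Hilbert spaces
  (types of class real_inner and complete_space) together with a complex
  structure J (multiplication by the imaginary unit).\<close>

definition complex_structure :: "('a::real_inner \<Rightarrow> 'a) \<Rightarrow> bool" where
  "complex_structure J \<longleftrightarrow> linear J \<and> (\<forall>x. J (J x) = - x) \<and> (\<forall>x. norm (J x) = norm x)"

definition cscale :: "('a::real_vector \<Rightarrow> 'a) \<Rightarrow> complex \<Rightarrow> 'a \<Rightarrow> 'a" where
  "cscale J c x = Re c *\<^sub>R x + Im c *\<^sub>R J x"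

text \<open>complex inner product, linear in the first, antilinear in the second argument\<close>
definition cinner :: "('a::real_inner \<Rightarrow> 'a) \<Rightarrow> 'a \<Rightarrow> 'a \<Rightarrow> complex" where
  "cinner J x y = Complex (inner x y) (inner x (J y))"

definition csubspace :: "('a::real_vector \<Rightarrow> 'a) \<Rightarrow> 'a set \<Rightarrow> bool" where
  "csubspace J D \<longleftrightarrow> subspace D \<and> (\<forall>x\<in>D. J x \<in> D)"

definition clinear_on :: "('a::real_vector \<Rightarrow> 'a) \<Rightarrow> ('b::real_vector \<Rightarrow> 'b) \<Rightarrow> 'a set \<Rightarrow> ('a \<Rightarrow> 'b) \<Rightarrow> bool" where
  "clinear_on J1 J2 D f \<longleftrightarrow>
     (\<forall>x\<in>D. \<forall>y\<in>D. f (x + y) = f x + f y) \<and>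
     (\<forall>x\<in>D. \<forall>r. f (r *\<^sub>R x) = r *\<^sub>R f x) \<and>
     (\<forall>x\<in>D. f (J1 x) = J2 (f x))"

definition closed_densely_defined :: "('a::real_normed_vector \<Rightarrow> 'a) \<Rightarrow> 'a set \<Rightarrow> ('a \<Rightarrow> 'a) \<Rightarrow> bool" where
  "closed_densely_defined J D A \<longleftrightarrow>
     csubspace J D \<and> clinear_on J J D A \<and> closure D = UNIV \<and> closed ((\<lambda>x. (x, A x)) ` D)"

text \<open>C : D(A) \<rightarrow> Y bounded, D(A) carrying the graph norm\<close>
definition graph_bounded :: "'a set \<Rightarrow> ('a::real_normed_vector \<Rightarrow> 'a) \<Rightarrow> ('a \<Rightarrow> 'b::real_normed_vector) \<Rightarrow> bool" where
  "graph_bounded D A C \<longleftrightarrow> (\<exists>K. \<forall>x\<in>D. norm (C x) \<le> K * (norm x + norm (A x)))"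

definition adj_dom :: "('a::real_inner \<Rightarrow> 'a) \<Rightarrow> 'a set \<Rightarrow> ('a \<Rightarrow> 'a) \<Rightarrow> 'a set" where
  "adj_dom J D E = {\<phi>. \<exists>\<psi>. \<forall>w\<in>D. cinner J (E w) \<phi> = cinner J w \<psi>}"

definition adj :: "('a::real_inner \<Rightarrow> 'a) \<Rightarrow> 'a set \<Rightarrow> ('a \<Rightarrow> 'a) \<Rightarrow> 'a \<Rightarrow> 'a" where
  "adj J D E \<phi> = (SOME \<psi>. \<forall>w\<in>D. cinner J (E w) \<phi> = cinner J w \<psi>)"

text \<open>An element of D(E*)' (dual with pivot W) is a bounded
  antilinear functional on D(E*) equipped with the graph norm; Fb y \<phi> is the duality
  pairing of F y with \<phi>.\<close>
definition dual_bounded :: "('b::real_normed_vector \<Rightarrow> 'b) \<Rightarrow> ('a::real_inner \<Rightarrow> 'a) \<Rightarrow> 'a set \<Rightarrow> ('a \<Rightarrow> 'a)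
     \<Rightarrow> ('b \<Rightarrow> 'a \<Rightarrow> complex) \<Rightarrow> bool" where
  "dual_bounded JY JW Ds Es Fb \<longleftrightarrow>
     (\<forall>\<phi>\<in>Ds. (\<forall>y1 y2. Fb (y1 + y2) \<phi> = Fb y1 \<phi> + Fb y2 \<phi>) \<and>
              (\<forall>y r. Fb (r *\<^sub>R y) \<phi> = complex_of_real r * Fb y \<phi>) \<and>
              (\<forall>y. Fb (JY y) \<phi> = \<i> * Fb y \<phi>)) \<and>
     (\<forall>y. (\<forall>\<phi>\<in>Ds. \<forall>\<psi>\<in>Ds. Fb y (\<phi> + \<psi>) = Fb y \<phi> + Fb y \<psi>) \<and>
          (\<forall>\<phi>\<in>Ds. \<forall>r. Fb y (r *\<^sub>R \<phi>) = complex_of_real r * Fb y \<phi>) \<and>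
          (\<forall>\<phi>\<in>Ds. Fb y (JW \<phi>) = - \<i> * Fb y \<phi>)) \<and>
     (\<exists>K. \<forall>y. \<forall>\<phi>\<in>Ds. cmod (Fb y \<phi>) \<le> K * norm y * (norm \<phi> + norm (Es \<phi>)))"

definition in_resolvent :: "('a::real_normed_vector \<Rightarrow> 'a) \<Rightarrow> 'a set \<Rightarrow> ('a \<Rightarrow> 'a) \<Rightarrow> complex \<Rightarrow> bool" where
  "in_resolvent J D E l \<longleftrightarrow> bij_betw (\<lambda>x. cscale J l x - E x) D UNIV"

text \<open>extended resolvent (\<lambda> - E_{-1})^{-1} : D(E*)' \<rightarrow> W applied to v \<in> D(E*)':
  the unique g \<in> W with (\<lambda> - E_{-1}) g = v in D(E*)', i.e.
  \<lambda> <g,\<phi>> - <g, E*\<phi>> = v(\<phi>) for all \<phi> \<in> D(E*).\<close>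
definition ext_resolvent :: "('a::real_inner \<Rightarrow> 'a) \<Rightarrow> 'a set \<Rightarrow> ('a \<Rightarrow> 'a) \<Rightarrow> complex
     \<Rightarrow> ('a \<Rightarrow> complex) \<Rightarrow> 'a" where
  "ext_resolvent J D E l v =
     (THE g. \<forall>\<phi>\<in>adj_dom J D E. l * cinner J g \<phi> - cinner J g (adj J D E \<phi>) = v \<phi>)"

definition riesz_basis :: "('a::real_normed_vector \<Rightarrow> 'a) \<Rightarrow> ('i \<Rightarrow> 'a) \<Rightarrow> bool" where
  "riesz_basis J e \<longleftrightarrow>
     closure {(\<Sum>i\<in>S. cscale J (c i) (e i)) | S c. finite S} = UNIV \<and>
     (\<exists>a b. 0 < a \<and> 0 < b \<and>
        (\<forall>S c. finite S \<longrightarrow>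
           a * (\<Sum>i\<in>S. (cmod (c i))\<^sup>2) \<le> (norm (\<Sum>i\<in>S. cscale J (c i) (e i)))\<^sup>2 \<and>
           (norm (\<Sum>i\<in>S. cscale J (c i) (e i)))\<^sup>2 \<le> b * (\<Sum>i\<in>S. (cmod (c i))\<^sup>2)))"

definition prod_J :: "('a \<Rightarrow> 'a) \<Rightarrow> ('b \<Rightarrow> 'b) \<Rightarrow> 'a \<times> 'b \<Rightarrow> 'a \<times> 'b" where
  "prod_J J1 J2 = (\<lambda>(x, y). (J1 x, J2 y))"

end

theory Submission
  imports Defs
begin


lemma cs_linear: "complex_structure J \<Longrightarrow> linear J"
  by (simp add: complex_structure_def)

lemma cs_inner_JJ:
  assumes "complex_structure J"
  shows "inner (J x) (J y) = inner x y"
proof -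
  have l: "linear J" using assms cs_linear by blast
  have n: "\<And>v. inner (J v) (J v) = inner v v"
    using assms by (metis complex_structure_def power2_norm_eq_inner)
  have "inner (J (x + y)) (J (x + y)) = inner (x + y) (x + y)" by (rule n)
  then have "inner (J x + J y) (J x + J y) = inner (x + y) (x + y)"
    using l by (simp add: linear_add)
  then show ?thesis using n[of x] n[of y]
    by (simp add: inner_add_left inner_add_right inner_commute)
qed

lemma cs_inner_J:
  assumes "complex_structure J"
  shows "inner x (J x) = 0"
proof -
  have "inner (J x) (J (J x)) = inner x (J x)" by (rule cs_inner_JJ[OF assms])
  moreover have "J (J x) = - x" using assms by (simp add: complex_structure_def)
  ultimately have "- inner (J x) x = inner x (J x)" by simp
  then show ?thesis by (simp add: inner_commute)
qed

lemma norm_cscale: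
  assumes "complex_structure J"
  shows "norm (cscale J c x) = cmod c * norm x"
proof -
  have n: "inner (J x) (J x) = inner x x" by (rule cs_inner_JJ[OF assms])
  have o: "inner x (J x) = 0" "inner (J x) x = 0"
    using cs_inner_J[OF assms] by (auto simp: inner_commute)
  have "(norm (cscale J c x))\<^sup>2 = inner (cscale J c x) (cscale J c x)"
    by (simp add: power2_norm_eq_inner)
  also have "\<dots> = (Re c)\<^sup>2 * inner x x + (Im c)\<^sup>2 * inner x x"
    by (simp add: cscale_def inner_add_left inner_add_right n o power2_eq_square)
  also have "\<dots> = (cmod c * norm x)\<^sup>2"
    by (simp add: cmod_power2 power_mult_distrib power2_norm_eq_inner algebra_simps)
  finally have "(norm (cscale J c x))\<^sup>2 = (cmod c * norm x)\<^sup>2" .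
  then show ?thesis by (simp add: power2_eq_imp_eq)
qed

lemma cscale_add: "cscale J (a + b) x = cscale J a x + cscale J b x"
  by (simp add: cscale_def scaleR_add_left)

lemma cscale_zero[simp]: "cscale J 0 x = 0"
  by (simp add: cscale_def)

lemma cscale_one[simp]: "cscale J 1 x = x"
  by (simp add: cscale_def)

lemma cscale_zero_right: "linear J \<Longrightarrow> cscale J c 0 = 0"
  by (simp add: cscale_def linear_0)

lemma cscale_scaleR: "linear J \<Longrightarrow> cscale J c (r *\<^sub>R x) = cscale J (c * of_real r) x"
  by (simp add: cscale_def linear_cmul)

lemma cscale_prod: "cscale (prod_J J1 J2) c (x, y) = (cscale J1 c x, cscale J2 c y)"
  by (simp add: cscale_def prod_J_def)



lemma ineq_core:
  fixes U N T Vv D D' X1 X2 aZ bZ aW bW G :: real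
  assumes pos: "aZ > 0" "aW > 0" "bZ > 0" "bW > 0" "G \<ge> 0"
    and nn: "D \<ge> 0" "D' \<ge> 0" "N \<ge> 0" "T \<ge> 0" "Vv \<ge> 0"
    and U1: "aZ * D \<le> U" and U2: "U \<le> bZ * D"
    and T1: "aW * D' \<le> T\<^sup>2" and T2: "T\<^sup>2 \<le> bW * D'"
    and V: "Vv\<^sup>2 \<le> G * D"
    and tri1: "T \<le> N + Vv" and tri2: "N \<le> T + Vv"
    and X1a: "aZ * D \<le> X1" and X1b: "X1 \<le> (bZ + G) * D"
    and X2a: "aW * D' \<le> X2" and X2b: "X2 \<le> bW * D'"
  shows "(1 / ((bZ + G) / aZ + 2 * bW * G / (aZ * aW) + 2 * bW / aW)) * (X1 + X2) \<le> U + N\<^sup>2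
       \<and> U + N\<^sup>2 \<le> ((bZ + 2 * G) / aZ + 2 * bW / aW) * (X1 + X2)"
proof
  have sq: "\<And>p q :: real. (p + q)\<^sup>2 \<le> 2 * p\<^sup>2 + 2 * q\<^sup>2"
    by (smt (verit) power2_diff power2_sum zero_le_power2)
  have "N\<^sup>2 \<le> (T + Vv)\<^sup>2" using tri2 nn by (simp add: power_mono)
  also have "\<dots> \<le> 2 * T\<^sup>2 + 2 * Vv\<^sup>2" by (rule sq)
  finally have N2: "N\<^sup>2 \<le> 2 * T\<^sup>2 + 2 * Vv\<^sup>2" .
  have "T\<^sup>2 \<le> (N + Vv)\<^sup>2" using tri1 nn by (simp add: power_mono)
  also have "\<dots> \<le> 2 * N\<^sup>2 + 2 * Vv\<^sup>2" by (rule sq)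
  finally have T3: "T\<^sup>2 \<le> 2 * N\<^sup>2 + 2 * Vv\<^sup>2" .
  have DU: "D \<le> U / aZ" using U1 pos by (simp add: field_simps)
  have DT: "D' \<le> T\<^sup>2 / aW" using T1 pos by (simp add: field_simps)
  define K where "K = (bZ + G) / aZ + 2 * bW * G / (aZ * aW) + 2 * bW / aW"
  have Kpos: "K > 0" unfolding K_def using pos by (intro add_pos_pos add_nonneg_pos) auto
  have "X1 + X2 \<le> (bZ + G) * D + bW * D'" using X1b X2b by simp
  also have "\<dots> \<le> (bZ + G) * (U / aZ) + bW * ((2 * N\<^sup>2 + 2 * (G * (U / aZ))) / aW)"
  proof -
    have "(bZ + G) * D \<le> (bZ + G) * (U / aZ)" using DU pos by (intro mult_left_mono) auto
    moreover have "D' \<le> (2 * N\<^sup>2 + 2 * (G * (U / aZ))) / aW"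
    proof -
      have "Vv\<^sup>2 \<le> G * (U / aZ)" using V DU pos by (meson mult_left_mono order_trans)
      then have "T\<^sup>2 \<le> 2 * N\<^sup>2 + 2 * (G * (U / aZ))" using T3 by linarith
      then have "T\<^sup>2 / aW \<le> (2 * N\<^sup>2 + 2 * (G * (U / aZ))) / aW" using pos by (simp add: divide_right_mono)
      then show ?thesis using DT by linarith
    qed
    then have "bW * D' \<le> bW * ((2 * N\<^sup>2 + 2 * (G * (U / aZ))) / aW)" using pos by (intro mult_left_mono) auto
    ultimately show ?thesis by linarith
  qed
  also have "\<dots> \<le> K * (U + N\<^sup>2)"
  proof -
    have U0: "U \<ge> 0" using U1 pos nn by (meson mult_nonneg_nonneg less_imp_le order_trans)
    have e: "K * (U + N\<^sup>2) - ((bZ + G) * (U / aZ) + bW * ((2 * N\<^sup>2 + 2 * (G * (U / aZ))) / aW))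
        = (2 * bW / aW) * U + ((bZ + G) / aZ + 2 * bW * G / (aZ * aW)) * N\<^sup>2"
      unfolding K_def using pos by (simp add: field_simps)
    have "0 \<le> (2 * bW / aW) * U + ((bZ + G) / aZ + 2 * bW * G / (aZ * aW)) * N\<^sup>2"
      using pos U0 by (intro add_nonneg_nonneg mult_nonneg_nonneg) auto
    then show ?thesis using e by linarith
  qed
  finally have "X1 + X2 \<le> K * (U + N\<^sup>2)" .
  then show "(1 / K) * (X1 + X2) \<le> U + N\<^sup>2" using Kpos by (simp add: field_simps)
next
  have sq: "\<And>p q :: real. (p + q)\<^sup>2 \<le> 2 * p\<^sup>2 + 2 * q\<^sup>2"
    by (smt (verit) power2_diff power2_sum zero_le_power2)
  have "N\<^sup>2 \<le> (T + Vv)\<^sup>2" using tri2 nn by (simp add: power_mono)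
  also have "\<dots> \<le> 2 * T\<^sup>2 + 2 * Vv\<^sup>2" by (rule sq)
  finally have N2: "N\<^sup>2 \<le> 2 * T\<^sup>2 + 2 * Vv\<^sup>2" .
  have "U + N\<^sup>2 \<le> (bZ + 2 * G) * D + 2 * bW * D'" using U2 N2 T2 V by (simp add: algebra_simps)
  also have "\<dots> \<le> ((bZ + 2 * G) / aZ + 2 * bW / aW) * (aZ * D + aW * D')"
  proof -
    have "0 \<le> ((bZ + 2 * G) / aZ) * (aW * D') + (2 * bW / aW) * (aZ * D)"
      using pos nn by (intro add_nonneg_nonneg mult_nonneg_nonneg) auto
    moreover have "((bZ + 2 * G) / aZ + 2 * bW / aW) * (aZ * D + aW * D')
      = ((bZ + 2 * G) * D + 2 * bW * D') + (((bZ + 2 * G) / aZ) * (aW * D') + (2 * bW / aW) * (aZ * D))"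
      using pos by (simp add: field_simps)
    ultimately show ?thesis by linarith
  qed
  also have "\<dots> \<le> ((bZ + 2 * G) / aZ + 2 * bW / aW) * (X1 + X2)"
    using X1a X2a pos by (intro mult_left_mono) auto
  finally show "U + N\<^sup>2 \<le> ((bZ + 2 * G) / aZ + 2 * bW / aW) * (X1 + X2)" .
qed


lemma riesz_ext:
  fixes JZ :: "'z::real_inner \<Rightarrow> 'z" and JW :: "'w::real_inner \<Rightarrow> 'w"
    and z :: "nat \<Rightarrow> 'z" and w g :: "nat \<Rightarrow> 'w"
  assumes csZ: "complex_structure JZ" and csW: "complex_structure JW"
    and rbZ: "riesz_basis JZ z" and rbW: "riesz_basis JW w"
    and sg: "summable (\<lambda>j. (norm (g j))\<^sup>2)"
  shows "riesz_basis (prod_J JZ JW)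
           (\<lambda>i. case i of Inl j \<Rightarrow> sgn (z j, g j) | Inr k \<Rightarrow> sgn ((0::'z), w k))"
proof -
  define e where "e = (\<lambda>i. case i of Inl j \<Rightarrow> sgn (z j, g j) | Inr k \<Rightarrow> sgn ((0::'z), w k))"
  define J where "J = prod_J JZ JW"
  have lZ: "linear JZ" and lW: "linear JW" using csZ csW cs_linear by auto
  obtain aZ bZ where aZ: "aZ > 0" and bZ: "bZ > 0"
    and rz: "\<And>S c. finite S \<Longrightarrow>
           aZ * (\<Sum>i\<in>S. (cmod (c i))\<^sup>2) \<le> (norm (\<Sum>i\<in>S. cscale JZ (c i) (z i)))\<^sup>2 \<and>
           (norm (\<Sum>i\<in>S. cscale JZ (c i) (z i)))\<^sup>2 \<le> bZ * (\<Sum>i\<in>S. (cmod (c i))\<^sup>2)"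
    and dZ: "closure {(\<Sum>i\<in>S. cscale JZ (c i) (z i)) | S c. finite S} = UNIV"
    using rbZ unfolding riesz_basis_def by blast
  obtain aW bW where aW: "aW > 0" and bW: "bW > 0"
    and rw: "\<And>S c. finite S \<Longrightarrow>
           aW * (\<Sum>i\<in>S. (cmod (c i))\<^sup>2) \<le> (norm (\<Sum>i\<in>S. cscale JW (c i) (w i)))\<^sup>2 \<and>
           (norm (\<Sum>i\<in>S. cscale JW (c i) (w i)))\<^sup>2 \<le> bW * (\<Sum>i\<in>S. (cmod (c i))\<^sup>2)"
    and dW: "closure {(\<Sum>i\<in>S. cscale JW (c i) (w i)) | S c. finite S} = UNIV"
    using rbW unfolding riesz_basis_def by blast
  define G where "G = (\<Sum>j. (norm (g j))\<^sup>2)"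
  have gS: "finite S \<Longrightarrow> (\<Sum>j\<in>S. (norm (g j))\<^sup>2) \<le> G" for S
    unfolding G_def by (rule sum_le_suminf[OF sg]) auto
  have gb: "(norm (g j))\<^sup>2 \<le> G" for j using gS[of "{j}"] by simp
  have G0: "G \<ge> 0" using gb[of 0] by (meson order_trans zero_le_power2)
  have zb: "aZ \<le> (norm (z j))\<^sup>2 \<and> (norm (z j))\<^sup>2 \<le> bZ" for j
    using rz[of "{j}" "\<lambda>_. 1"] by simp
  have wb: "aW \<le> (norm (w k))\<^sup>2 \<and> (norm (w k))\<^sup>2 \<le> bW" for k
    using rw[of "{k}" "\<lambda>_. 1"] by simp
  define n where "n j = norm (z j, g j)" for j
  define m where "m k = norm (w k)" for k
  have n2: "(n j)\<^sup>2 = (norm (z j))\<^sup>2 + (norm (g j))\<^sup>2" for j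
    unfolding n_def norm_Pair by simp
  have npos: "n j > 0" for j
  proof -
    have "(n j)\<^sup>2 > 0" using n2[of j] zb[of j] aZ by (smt (verit) zero_le_power2)
    moreover have "n j \<ge> 0" unfolding n_def by simp
    ultimately show ?thesis by (metis less_eq_real_def power_zero_numeral)
  qed
  have mpos: "m k > 0" for k
  proof -
    have "(m k)\<^sup>2 > 0" using wb[of k] aW unfolding m_def by linarith
    moreover have "m k \<ge> 0" unfolding m_def by simp
    ultimately show ?thesis by (metis less_eq_real_def power_zero_numeral)
  qed
  have termL: "cscale J c (e (Inl j)) =
      (cscale JZ (c * of_real (inverse (n j))) (z j), cscale JW (c * of_real (inverse (n j))) (g j))" for c j
    by (simp add: e_def J_def sgn_div_norm scaleR_Pair cscale_prod cscale_scaleR lZ lW n_def)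
  have termR: "cscale J c (e (Inr k)) = (0, cscale JW (c * of_real (inverse (m k))) (w k))" for c k
    by (simp add: e_def J_def sgn_div_norm scaleR_Pair cscale_prod cscale_scaleR lZ lW m_def
        cscale_zero_right norm_Pair1)
  define b where "b = (bZ + 2 * G) / aZ + 2 * bW / aW"
  define K where "K = (bZ + G) / aZ + 2 * bW * G / (aZ * aW) + 2 * bW / aW"
  have Kpos: "K > 0" unfolding K_def using aZ aW bZ bW G0
    by (intro add_pos_pos add_nonneg_pos) auto
  have bpos: "b > 0" unfolding b_def using aZ aW bZ bW G0
    by (intro add_pos_pos) auto
  have bounds: "(1 / K) * (\<Sum>i\<in>S. (cmod (c i))\<^sup>2) \<le> (norm (\<Sum>i\<in>S. cscale J (c i) (e i)))\<^sup>2 \<and>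
           (norm (\<Sum>i\<in>S. cscale J (c i) (e i)))\<^sup>2 \<le> b * (\<Sum>i\<in>S. (cmod (c i))\<^sup>2)"
    if fS: "finite S" for S c
  proof -
    define S1 where "S1 = Inl -` S"
    define S2 where "S2 = Inr -` S"
    have f1: "finite S1" unfolding S1_def using fS by (simp add: finite_vimageI)
    have f2: "finite S2" unfolding S2_def using fS by (simp add: finite_vimageI)
    have SP: "S = S1 <+> S2" unfolding S1_def S2_def
      by (auto simp: Plus_def image_iff) (metis sum.exhaust)
    define d where "d j = c (Inl j) * of_real (inverse (n j))" for j
    define d' where "d' k = c (Inr k) * of_real (inverse (m k))" for k
    define u where "u = (\<Sum>j\<in>S1. cscale JZ (d j) (z j))"
    define v where "v = (\<Sum>j\<in>S1. cscale JW (d j) (g j))"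
    define t where "t = (\<Sum>k\<in>S2. cscale JW (d' k) (w k))"
    have sumeq: "(\<Sum>i\<in>S. cscale J (c i) (e i)) = (u, v + t)"
    proof -
      have "(\<Sum>i\<in>S. cscale J (c i) (e i))
          = (\<Sum>j\<in>S1. cscale J (c (Inl j)) (e (Inl j))) + (\<Sum>k\<in>S2. cscale J (c (Inr k)) (e (Inr k)))"
        unfolding SP using f1 f2 by (simp add: sum.Plus o_def)
      also have "\<dots> = (u, v) + (0, t)"
        by (simp add: termL termR sum_prod u_def v_def t_def d_def d'_def)
      finally show ?thesis by simp
    qed
    define D where "D = (\<Sum>j\<in>S1. (cmod (d j))\<^sup>2)"
    define D' where "D' = (\<Sum>k\<in>S2. (cmod (d' k))\<^sup>2)"
    define X1 where "X1 = (\<Sum>j\<in>S1. (cmod (d j))\<^sup>2 * (n j)\<^sup>2)"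
    define X2 where "X2 = (\<Sum>k\<in>S2. (cmod (d' k))\<^sup>2 * (m k)\<^sup>2)"
    have cmodeq: "(\<Sum>i\<in>S. (cmod (c i))\<^sup>2) = X1 + X2"
    proof -
      have a: "(cmod (d j))\<^sup>2 * (n j)\<^sup>2 = (cmod (c (Inl j)))\<^sup>2" for j
        proof -
        have "cmod (d j) = cmod (c (Inl j)) * inverse (n j)"
          unfolding d_def norm_mult norm_of_real using npos[of j] by simp
        then have "cmod (c (Inl j)) = cmod (d j) * n j" using npos[of j] by (simp add: field_simps)
        then show ?thesis by (simp add: power_mult_distrib)
      qed
      have b: "(cmod (d' k))\<^sup>2 * (m k)\<^sup>2 = (cmod (c (Inr k)))\<^sup>2" for k
        proof -
        have "cmod (d' k) = cmod (c (Inr k)) * inverse (m k)"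
          unfolding d'_def norm_mult norm_of_real using mpos[of k] by simp
        then have "cmod (c (Inr k)) = cmod (d' k) * m k" using mpos[of k] by (simp add: field_simps)
        then show ?thesis by (simp add: power_mult_distrib)
      qed
      show ?thesis unfolding SP X1_def X2_def using f1 f2 by (simp add: sum.Plus o_def a b)
    qed
    have normeq: "(norm (u, v + t))\<^sup>2 = (norm u)\<^sup>2 + (norm (v + t))\<^sup>2"
      by (simp add: norm_Pair)
    have U: "aZ * D \<le> (norm u)\<^sup>2 \<and> (norm u)\<^sup>2 \<le> bZ * D"
      unfolding D_def u_def by (rule rz[OF f1])
    have T: "aW * D' \<le> (norm t)\<^sup>2 \<and> (norm t)\<^sup>2 \<le> bW * D'"
      unfolding D'_def t_def by (rule rw[OF f2])
    have V: "(norm v)\<^sup>2 \<le> G * D"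
    proof -
      have "norm v \<le> (\<Sum>j\<in>S1. cmod (d j) * norm (g j))"
        unfolding v_def by (rule order_trans[OF norm_sum]) (simp add: norm_cscale[OF csW])
      then have "(norm v)\<^sup>2 \<le> (\<Sum>j\<in>S1. cmod (d j) * norm (g j))\<^sup>2"
        by (simp add: power_mono)
      also have "\<dots> \<le> D * (\<Sum>j\<in>S1. (norm (g j))\<^sup>2)"
        unfolding D_def by (rule Cauchy_Schwarz_ineq_sum)
      also have "\<dots> \<le> D * G"
        using gS[OF f1] by (intro mult_left_mono) (auto simp: D_def intro: sum_nonneg)
      finally show ?thesis by (simp add: mult.commute)
    qed
    have tri1: "norm t \<le> norm (v + t) + norm v"
      using norm_triangle_ineq4[of "v + t" v] by simp
    have tri2: "norm (v + t) \<le> norm t + norm v"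
      using norm_triangle_ineq[of t v] by (simp add: add.commute)
    have X1a: "aZ * D \<le> X1" unfolding D_def X1_def sum_distrib_left
    proof (rule sum_mono)
      fix j assume "j \<in> S1"
      have "aZ \<le> (n j)\<^sup>2" using n2[of j] zb[of j] by (smt (verit) zero_le_power2)
      then show "aZ * (cmod (d j))\<^sup>2 \<le> (cmod (d j))\<^sup>2 * (n j)\<^sup>2"
        by (metis mult.commute mult_right_mono zero_le_power2)
    qed
    have X1b: "X1 \<le> (bZ + G) * D" unfolding D_def X1_def sum_distrib_left
    proof (rule sum_mono)
      fix j assume "j \<in> S1"
      have "(n j)\<^sup>2 \<le> bZ + G" using n2[of j] zb[of j] gb[of j] by linarith
      then show "(cmod (d j))\<^sup>2 * (n j)\<^sup>2 \<le> (bZ + G) * (cmod (d j))\<^sup>2"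
        by (metis mult.commute mult_right_mono zero_le_power2)
    qed
    have X2a: "aW * D' \<le> X2" unfolding D'_def X2_def sum_distrib_left
      by (rule sum_mono) (use wb in \<open>metis m_def mult.commute mult_right_mono zero_le_power2\<close>)
    have X2b: "X2 \<le> bW * D'" unfolding D'_def X2_def sum_distrib_left
      by (rule sum_mono) (use wb in \<open>metis m_def mult.commute mult_right_mono zero_le_power2\<close>)
    have core: "(1 / K) * (X1 + X2) \<le> (norm u)\<^sup>2 + (norm (v + t))\<^sup>2
       \<and> (norm u)\<^sup>2 + (norm (v + t))\<^sup>2 \<le> b * (X1 + X2)"
      unfolding K_def b_def
      by (rule ineq_core[OF aZ aW bZ bW G0 _ _ _ _ _ _ _ _ _ V tri1 tri2 X1a X1b X2a X2b])
         (use U T in \<open>auto simp: D_def D'_def intro: sum_nonneg\<close>)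
    show ?thesis using core unfolding sumeq normeq cmodeq .
  qed
  define P where "P = {(\<Sum>i\<in>S. cscale J (c i) (e i)) | S c. finite S}"
  have ext: "(\<Sum>i\<in>S. cscale J (c i) (e i)) = (\<Sum>i\<in>T. cscale J (if i \<in> S then c i else 0) (e i))"
    if "finite T" "S \<subseteq> T" for S T c
    by (rule sum.mono_neutral_cong_left) (use that in auto)
  have addP: "p + q \<in> P" if "p \<in> P" "q \<in> P" for p q
  proof -
    obtain S1 c1 where 1: "finite S1" "p = (\<Sum>i\<in>S1. cscale J (c1 i) (e i))" using \<open>p \<in> P\<close> P_def by blast
    obtain S2 c2 where 2: "finite S2" "q = (\<Sum>i\<in>S2. cscale J (c2 i) (e i))" using \<open>q \<in> P\<close> P_def by blast
    have "p + q = (\<Sum>i\<in>S1 \<union> S2. cscale J ((if i \<in> S1 then c1 i else 0) + (if i \<in> S2 then c2 i else 0)) (e i))"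
      unfolding 1 2 cscale_add sum.distrib
      by (subst ext[of "S1 \<union> S2" S1], use 1 2 in auto) (subst ext[of "S1 \<union> S2" S2], use 1 2 in auto)
    then show ?thesis unfolding P_def mem_Collect_eq using 1 2
      by (intro exI[of _ "S1 \<union> S2"] exI[of _ "\<lambda>i. (if i \<in> S1 then c1 i else 0) + (if i \<in> S2 then c2 i else 0)"]) auto
  qed
  have negP: "- p \<in> P" if "p \<in> P" for p
  proof -
    obtain S1 c1 where 1: "finite S1" "p = (\<Sum>i\<in>S1. cscale J (c1 i) (e i))" using \<open>p \<in> P\<close> P_def by blast
    have "- p = (\<Sum>i\<in>S1. cscale J (- c1 i) (e i))"
      unfolding 1 by (simp add: cscale_def sum_negf[symmetric] algebra_simps)
    then show ?thesis unfolding P_def mem_Collect_eq using 1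
      by (intro exI[of _ S1] exI[of _ "\<lambda>i. - c1 i"]) auto
  qed
  have cadd: "p + q \<in> closure P" if pq: "p \<in> closure P" "q \<in> closure P" for p q
  proof -
    obtain x where x: "\<forall>n. x n \<in> P" "x \<longlonglongrightarrow> p" using pq(1) unfolding closure_sequential by blast
    obtain y where y: "\<forall>n. y n \<in> P" "y \<longlonglongrightarrow> q" using pq(2) unfolding closure_sequential by blast
    have "\<forall>n. x n + y n \<in> P" using x y addP by blast
    moreover have "(\<lambda>n. x n + y n) \<longlonglongrightarrow> p + q" using x y by (intro tendsto_add) auto
    ultimately show ?thesis unfolding closure_sequential by (intro exI[of _ "\<lambda>n. x n + y n"] conjI)
  qed
  have cneg: "- p \<in> closure P" if pq: "p \<in> closure P" for p
  proof -
    obtain x where x: "\<forall>n. x n \<in> P" "x \<longlonglongrightarrow> p" using pq(1) unfolding closure_sequential by blast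
    have "\<forall>n. - x n \<in> P" using x negP by blast
    moreover have "(\<lambda>n. - x n) \<longlonglongrightarrow> - p" using x by (intro tendsto_minus) auto
    ultimately show ?thesis unfolding closure_sequential by (intro exI[of _ "\<lambda>n. - x n"] conjI)
  qed
  have climit: "p \<in> closure P" if "\<forall>n. x n \<in> closure P" "x \<longlonglongrightarrow> p" for x p
  proof -
    have "p \<in> closure (closure P)" using that unfolding closure_sequential[of p "closure P"] by blast
    then show ?thesis by simp
  qed
  have PR: "((0::'z), y) \<in> P" if yP: "y \<in> {(\<Sum>i\<in>S. cscale JW (c i) (w i)) | S c. finite S}" for y
  proof -
    obtain S c where S: "finite S" "y = (\<Sum>i\<in>S. cscale JW (c i) (w i))" using yP by auto
    define c' where "c' = (\<lambda>i::nat + nat. case i of Inr k \<Rightarrow> c k * of_real (m k) | Inl _ \<Rightarrow> 0)"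
    have "(\<Sum>i\<in>Inr ` S. cscale J (c' i) (e i)) = (\<Sum>k\<in>S. cscale J (c' (Inr k)) (e (Inr k)))"
      by (simp add: sum.reindex)
    also have "\<dots> = (\<Sum>k\<in>S. ((0::'z), cscale JW (c k) (w k)))"
    proof (rule sum.cong)
      fix k assume "k \<in> S"
      have "of_real (m k) * of_real (inverse (m k)) = (1::complex)" using mpos[of k]
        by (metis of_real_1 of_real_mult right_inverse less_irrefl)
      then have "c k * of_real (m k) * of_real (inverse (m k)) = c k"
        by (metis mult.assoc mult_1_right)
      then show "cscale J (c' (Inr k)) (e (Inr k)) = ((0::'z), cscale JW (c k) (w k))"
        by (simp only: termR c'_def sum.case)
    qed simp
    also have "\<dots> = (0, y)" by (simp add: sum_prod S)
    finally show ?thesis unfolding P_def mem_Collect_eq using S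
      by (intro exI[of _ "Inr ` S"] exI[of _ c']) auto
  qed
  have PL: "(x, (\<Sum>i\<in>S. cscale JW (c i) (g i))) \<in> P"
    if "finite S" "x = (\<Sum>i\<in>S. cscale JZ (c i) (z i))" for x S c
  proof -
    define c' where "c' = (\<lambda>i::nat + nat. case i of Inl j \<Rightarrow> c j * of_real (n j) | Inr _ \<Rightarrow> 0)"
    have "(\<Sum>i\<in>Inl ` S. cscale J (c' i) (e i)) = (\<Sum>j\<in>S. cscale J (c' (Inl j)) (e (Inl j)))"
      by (simp add: sum.reindex)
    also have "\<dots> = (\<Sum>j\<in>S. (cscale JZ (c j) (z j), cscale JW (c j) (g j)))"
    proof (rule sum.cong)
      fix j assume "j \<in> S"
      have "of_real (n j) * of_real (inverse (n j)) = (1::complex)" using npos[of j]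
        by (metis of_real_1 of_real_mult right_inverse less_irrefl)
      then have "c j * of_real (n j) * of_real (inverse (n j)) = c j"
        by (metis mult.assoc mult_1_right)
      then show "cscale J (c' (Inl j)) (e (Inl j)) = (cscale JZ (c j) (z j), cscale JW (c j) (g j))"
        by (simp only: termL c'_def sum.case)
    qed simp
    also have "\<dots> = (x, (\<Sum>i\<in>S. cscale JW (c i) (g i)))" by (simp add: sum_prod that)
    finally show ?thesis unfolding P_def mem_Collect_eq using that
      by (intro exI[of _ "Inl ` S"] exI[of _ c']) auto
  qed
  have R: "((0::'z), y) \<in> closure P" for y
  proof -
    have "y \<in> closure {(\<Sum>i\<in>S. cscale JW (c i) (w i)) | S c. finite S}" using dW by simp
    then obtain t where t: "\<forall>n. t n \<in> {(\<Sum>i\<in>S. cscale JW (c i) (w i)) | S c. finite S}" "t \<longlonglongrightarrow> y"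
      unfolding closure_sequential by blast
    have "\<forall>n. ((0::'z), t n) \<in> P" using t PR by blast
    moreover have "(\<lambda>n. ((0::'z), t n)) \<longlonglongrightarrow> (0, y)" using t by (intro tendsto_Pair) auto
    ultimately show ?thesis unfolding closure_sequential by (intro exI[of _ "\<lambda>n. ((0::'z), t n)"] conjI)
  qed
  have L0: "(x, 0) \<in> closure P" if xP: "x \<in> {(\<Sum>i\<in>S. cscale JZ (c i) (z i)) | S c. finite S}" for x
  proof -
    obtain S c where S: "finite S" "x = (\<Sum>i\<in>S. cscale JZ (c i) (z i))" using xP by auto
    define v where "v = (\<Sum>i\<in>S. cscale JW (c i) (g i))"
    have "(x, v) \<in> closure P" using PL[OF S] closure_subset unfolding v_def by blast
    moreover have "((0::'z), - v) \<in> closure P" by (rule R)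
    ultimately have "(x, v) + (0, - v) \<in> closure P" by (rule cadd)
    then show ?thesis by simp
  qed
  have L: "(x, 0) \<in> closure P" for x
  proof -
    have "x \<in> closure {(\<Sum>i\<in>S. cscale JZ (c i) (z i)) | S c. finite S}" using dZ by simp
    then obtain u where u: "\<forall>n. u n \<in> {(\<Sum>i\<in>S. cscale JZ (c i) (z i)) | S c. finite S}" "u \<longlonglongrightarrow> x"
      unfolding closure_sequential by blast
    have "\<forall>n. (u n, (0::'w)) \<in> closure P" using u L0 by blast
    moreover have "(\<lambda>n. (u n, (0::'w))) \<longlonglongrightarrow> (x, 0)" using u by (intro tendsto_Pair) auto
    ultimately show ?thesis by (rule climit)
  qed
  have dense: "closure P = UNIV"
  proof (rule set_eqI, rule iffI)
    fix p :: "'z \<times> 'w"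
    have "(fst p, 0) + (0, snd p) \<in> closure P" using L R by (rule cadd)
    then show "p \<in> closure P" by simp
  qed simp
  have "riesz_basis J e" unfolding riesz_basis_def
  proof (rule conjI)
    show "closure {(\<Sum>i\<in>S. cscale J (c i) (e i)) | S c. finite S} = UNIV"
      using dense unfolding P_def .
  next
  show "\<exists>a b. 0 < a \<and> 0 < b \<and> (\<forall>S c. finite S \<longrightarrow>
           a * (\<Sum>i\<in>S. (cmod (c i))\<^sup>2) \<le> (norm (\<Sum>i\<in>S. cscale J (c i) (e i)))\<^sup>2 \<and>
           (norm (\<Sum>i\<in>S. cscale J (c i) (e i)))\<^sup>2 \<le> b * (\<Sum>i\<in>S. (cmod (c i))\<^sup>2))"
  proof (rule exI[of _ "1 / K"], rule exI[of _ b], intro conjI allI impI)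
    show "0 < 1 / K" using Kpos by simp
    show "0 < b" by (rule bpos)
    fix S :: "(nat + nat) set" and c assume "finite S"
    note bb = bounds[OF this, of c]
    show "1 / K * (\<Sum>i\<in>S. (cmod (c i))\<^sup>2) \<le> (norm (\<Sum>i\<in>S. cscale J (c i) (e i)))\<^sup>2"
      using bb by blast
    show "(norm (\<Sum>i\<in>S. cscale J (c i) (e i)))\<^sup>2 \<le> b * (\<Sum>i\<in>S. (cmod (c i))\<^sup>2)"
      using bb by blast
  qed
  qed
  then show ?thesis unfolding e_def J_def .
qed

theorem proposition2p9:
  fixes JZ :: "'z::{real_inner,complete_space} \<Rightarrow> 'z"
    and JW :: "'w::{real_inner,complete_space} \<Rightarrow> 'w"
    and JY :: "'y::{real_inner,complete_space} \<Rightarrow> 'y"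
    and DA :: "'z set" and A :: "'z \<Rightarrow> 'z"
    and DE :: "'w set" and E :: "'w \<Rightarrow> 'w"
    and C :: "'z \<Rightarrow> 'y"
    and F :: "'y \<Rightarrow> 'w \<Rightarrow> complex"
    and z :: "nat \<Rightarrow> 'z" and w :: "nat \<Rightarrow> 'w"
    and lam mu :: "nat \<Rightarrow> complex"
  assumes "complex_structure JZ" and "complex_structure JW" and "complex_structure JY"
    and "closed_densely_defined JZ DA A"
    and "closed_densely_defined JW DE E"
    and "clinear_on JZ JY DA C" and "graph_bounded DA A C"
    and "dual_bounded JY JW (adj_dom JW DE E) (adj JW DE E) F"
    and "riesz_basis JZ z" and "\<forall>j. z j \<in> DA \<and> A (z j) = cscale JZ (lam j) (z j)"
    and "riesz_basis JW w" and "\<forall>k. w k \<in> DE \<and> E (w k) = cscale JW (mu k) (w k)"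
    and "\<forall>j k. lam j \<noteq> mu k"
    and "\<forall>j. in_resolvent JW DE E (lam j)"
    and "summable (\<lambda>j. (norm (ext_resolvent JW DE E (lam j) (F (C (z j)))))\<^sup>2)"
  shows "riesz_basis (prod_J JZ JW)
           (\<lambda>i. case i of
                   Inl j \<Rightarrow> sgn (z j, ext_resolvent JW DE E (lam j) (F (C (z j))))
                 | Inr k \<Rightarrow> sgn ((0::'z), w k))"
  by (rule riesz_ext[OF assms(1,2,9,11,15)])

end
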